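(* Let $n\in\mathbb N$, $\epsilon\in[0,1)$, $\beta>0$, $\tau\in[0,1]$, and let $\mu$ be the uniform measure over $\mathbb F_2^n$. For $z\in\mathbb F_2^n$ define the loss function $l^z:\mathbb F_2^n\to[0,1]$, $l^z(y)=L(\mathrm d_{\mathrm{tr}}(|y\rangle\langle y|,|z\rangle\langle z|))=1-|\langle y|z\rangle|$ with $L(x)=1-\sqrt{1-x^2}$. Any (deterministic) algorithm that, given access to $\mathrm{Eval}_\tau(l^z)$ for unknown $z$, outputs some $y$ with $l^z(y)\le\epsilon$ for a set of $z$ of $\mu$-measure at least $\beta$, requires at least $(\beta-2^{-n})2^n$ queries. In particular, every loss function $l^z$, $z\in\mathbb F_2^n$, admits a narrow gorge with respect to the uniform measure over $\mathbb F_2^n$.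
   Context: $\mathrm d_{\mathrm{tr}}(\rho,\sigma)=\frac12\|\rho-\sigma\|_{\mathrm{tr}}$. The oracle $\mathrm{Eval}_\tau(l)$, queried with $y$, returns some value $v$ with $|v-l(y)|\le\tau$ (any such value). A family of loss functions $l^{(n)}:\Theta^{(n)}\to\mathbb R$ with measures $\nu^{(n)}$ on $\Theta^{(n)}$ admits a narrow gorge if (i) $\mathbb E_{\vartheta\sim\nu^{(n)}}[l^{(n)}(\vartheta)]-\min_\vartheta l^{(n)}(\vartheta)=\Omega(1/\mathrm{poly}(n))$ and (ii) for every $\delta>0$, $\Pr_{\vartheta\sim\nu^{(n)}}[|l^{(n)}(\vartheta)-\mathbb E_{\nu^{(n)}}[l^{(n)}]|>\delta]\le2^{-\Omega(n)}/\delta^2$. *)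

theory Defs
  imports "HOL-Analysis.Analysis"
begin

text \<open>F_2^n rendered as bit strings (bool lists) of length n.\<close>
definition F2 :: "nat \<Rightarrow> bool list set" where
  "F2 n = {xs. length xs = n}"

text \<open>Computational basis state |y> in C^(2^n), as a function on the basis labels.\<close>
definition ket :: "bool list \<Rightarrow> bool list \<Rightarrow> complex" where
  "ket y = (\<lambda>w. if w = y then 1 else 0)"

definition braket :: "nat \<Rightarrow> bool list \<Rightarrow> bool list \<Rightarrow> complex" where
  "braket n y z = (\<Sum>w\<in>F2 n. cnj (ket y w) * ket z w)"

text \<open>l^z(y) = 1 - |<y|z>|  (= L(d_tr(|y><y|,|z><z|)) with L(x) = 1 - sqrt(1-x^2)).\<close>
definition loss :: "nat \<Rightarrow> bool list \<Rightarrow> bool list \<Rightarrow> real" where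
  "loss n z y = 1 - cmod (braket n y z)"

text \<open>A deterministic adaptive algorithm making q oracle queries: the i-th query
  is a function Q of the answers received so far; the output is a function of
  all q answers.  run Q Orc k = list of the first k answers, where the oracle
  Orc answers query y with Orc y.\<close>
fun run :: "(real list \<Rightarrow> bool list) \<Rightarrow> (bool list \<Rightarrow> real) \<Rightarrow> nat \<Rightarrow> real list" where
  "run Q Orc 0 = []"
| "run Q Orc (Suc k) = (let as = run Q Orc k in as @ [Orc (Q as)])"

definition valid_Eval :: "real \<Rightarrow> (bool list \<Rightarrow> real) \<Rightarrow> nat \<Rightarrow> (bool list \<Rightarrow> real) \<Rightarrow> bool" where
  "valid_Eval \<tau> l n Orc \<longleftrightarrow> (\<forall>y\<in>F2 n. \<bar>Orc y - l y\<bar> \<le> \<tau>)"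

definition success_set :: "nat \<Rightarrow> real \<Rightarrow> real \<Rightarrow> (real list \<Rightarrow> bool list)
    \<Rightarrow> (real list \<Rightarrow> bool list) \<Rightarrow> nat \<Rightarrow> bool list set" where
  "success_set n \<epsilon> \<tau> Q out q =
     {z\<in>F2 n. \<forall>Orc. valid_Eval \<tau> (loss n z) n Orc \<longrightarrow> loss n z (out (run Q Orc q)) \<le> \<epsilon>}"

definition mu :: "nat \<Rightarrow> bool list set \<Rightarrow> real" where
  "mu n A = real (card (A \<inter> F2 n)) / 2 ^ n"

definition expect_unif :: "'a set \<Rightarrow> ('a \<Rightarrow> real) \<Rightarrow> real" where
  "expect_unif T f = (\<Sum>t\<in>T. f t) / real (card T)"

definition prob_unif :: "'a set \<Rightarrow> ('a \<Rightarrow> bool) \<Rightarrow> real" where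
  "prob_unif T P = real (card {t\<in>T. P t}) / real (card T)"

definition narrow_gorge_unif :: "(nat \<Rightarrow> 'a \<Rightarrow> real) \<Rightarrow> (nat \<Rightarrow> 'a set) \<Rightarrow> bool" where
  "narrow_gorge_unif l T \<longleftrightarrow>
     (\<exists>c>0. \<exists>k::nat. \<exists>N. \<forall>n\<ge>N.
        expect_unif (T n) (l n) - (INF t\<in>T n. l n t) \<ge> c / real n ^ k)
   \<and> (\<exists>c>0. \<exists>C. \<exists>N. \<forall>n\<ge>N. \<forall>\<delta>>0.
        prob_unif (T n) (\<lambda>t. \<bar>l n t - expect_unif (T n) (l n)\<bar> > \<delta>)
          \<le> C * 2 powr (- c * real n) / \<delta>\<^sup>2)"

end

theory Submission
  imports Defs
begin

lemma F2_finite: "finite (F2 n)" and F2_card: "card (F2 n) = 2 ^ n"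
proof -
  have e: "F2 n = {xs. set xs \<subseteq> (UNIV::bool set) \<and> length xs = n}"
    by (auto simp: F2_def)
  show "finite (F2 n)" unfolding e by (rule finite_lists_length_eq) simp
  show "card (F2 n) = 2 ^ n" unfolding e by (subst card_lists_length_eq) (auto simp: card_UNIV_bool)
qed

lemma braket_eq: "braket n y z = (if y = z \<and> y \<in> F2 n then 1 else 0)"
proof -
  have "braket n y z = (\<Sum>w\<in>F2 n. if w = y \<and> w = z then 1 else 0)"
    unfolding braket_def ket_def by (rule sum.cong) auto
  also have "\<dots> = (\<Sum>w\<in>F2 n \<inter> {w. w = y \<and> w = z}. 1)"
    by (subst sum.inter_restrict[OF F2_finite]) (auto intro!: sum.cong)
  also have "\<dots> = (if y = z \<and> y \<in> F2 n then 1 else 0)"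
  proof (cases "y = z \<and> y \<in> F2 n")
    case True
    then have "F2 n \<inter> {w. w = y \<and> w = z} = {y}" by auto
    then show ?thesis using True by auto
  next
    case False
    then have "F2 n \<inter> {w. w = y \<and> w = z} = {}" by auto
    then show ?thesis using False by simp
  qed
  finally show ?thesis .
qed

lemma loss_eq: "loss n z y = (if y = z \<and> y \<in> F2 n then 0 else 1)"
  by (auto simp add: loss_def braket_eq)

lemma run_same:
  assumes "\<forall>j<k. Q (run Q Ora j) \<noteq> z" "\<forall>y. y \<noteq> z \<longrightarrow> Orb y = Ora y"
  shows "run Q Orb k = run Q Ora k"
  using assms by (induction k) (auto simp: Let_def)

lemma part1:
  fixes n q :: nat and \<epsilon> \<beta> \<tau> :: real
    and Q out :: "real list \<Rightarrow> bool list"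
  assumes "0 \<le> \<epsilon>" "\<epsilon> < 1" "\<beta> > 0" "0 \<le> \<tau>" "\<tau> \<le> 1"
    and "mu n (success_set n \<epsilon> \<tau> Q out q) \<ge> \<beta>"
  shows "real q \<ge> (\<beta> - 2 powr (- real n)) * 2 ^ n"
proof -
  define Ora :: "bool list \<Rightarrow> real" where "Ora = (\<lambda>_. 1)"
  define Y where "Y = (\<lambda>j. Q (run Q Ora j)) ` {..<q}"
  define outp where "outp = out (run Q Ora q)"
  let ?S = "success_set n \<epsilon> \<tau> Q out q"
  have sub: "?S \<inter> F2 n \<subseteq> insert outp Y"
  proof
    fix z assume zS: "z \<in> ?S \<inter> F2 n"
    show "z \<in> insert outp Y"
    proof (rule ccontr)
      assume nz: "z \<notin> insert outp Y"
      have v: "valid_Eval \<tau> (loss n z) n (loss n z)"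
        using assms(4) by (simp add: valid_Eval_def)
      have "\<forall>j<q. Q (run Q Ora j) \<noteq> z" using nz by (auto simp: Y_def)
      moreover have "\<forall>y. y \<noteq> z \<longrightarrow> loss n z y = Ora y" by (simp add: loss_eq Ora_def)
      ultimately have r: "run Q (loss n z) q = run Q Ora q" by (rule run_same)
      have "loss n z (out (run Q (loss n z) q)) \<le> \<epsilon>"
        using zS v by (auto simp: success_set_def)
      then have "loss n z outp \<le> \<epsilon>" using r by (simp add: outp_def)
      then have "outp = z" using assms(2) by (auto simp: loss_eq split: if_splits)
      then show False using nz by simp
    qed
  qed
  have "card (?S \<inter> F2 n) \<le> card (insert outp Y)"
    by (rule card_mono[OF _ sub]) (simp add: Y_def)
  also have "\<dots> \<le> Suc (card Y)" by (simp add: card_insert_le_m1 card_insert_if)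
  also have "card Y \<le> q" unfolding Y_def using card_image_le[of "{..<q}"] by simp
  finally have c: "real (card (?S \<inter> F2 n)) \<le> real q + 1" by simp
  have "\<beta> \<le> real (card (?S \<inter> F2 n)) / 2 ^ n" using assms(6) by (simp add: mu_def)
  then have "\<beta> * 2 ^ n \<le> real (card (?S \<inter> F2 n))" by (simp add: field_simps)
  moreover have "2 powr (- real n) * 2 ^ n = (1::real)"
    by (simp add: powr_minus powr_realpow divide_inverse)
  ultimately show ?thesis using c by (simp add: algebra_simps)
qed


lemma part2:
  assumes zm: "\<And>m. zs m \<in> F2 m"
  shows "narrow_gorge_unif (\<lambda>m. loss m (zs m)) F2"
proof -
  have E: "expect_unif (F2 m) (loss m (zs m)) = 1 - 1 / 2 ^ m" for m
  proof -
    have "(\<Sum>t\<in>F2 m. loss m (zs m) t) = (\<Sum>t\<in>F2 m. 1 - (if t = zs m then 1 else 0))"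
      by (rule sum.cong) (auto simp: loss_eq)
    also have "\<dots> = 2 ^ m - 1"
      using zm[of m] by (simp add: sum_subtractf F2_finite F2_card)
    finally show ?thesis by (simp add: expect_unif_def F2_card field_simps)
  qed
  have I: "(INF t\<in>F2 m. loss m (zs m) t) = 0" for m
    by (rule cInf_eq_minimum) (use zm[of m] in \<open>auto simp: loss_eq\<close>)
  have A: "\<exists>c>0. \<exists>k::nat. \<exists>N. \<forall>n\<ge>N.
        expect_unif (F2 n) (loss n (zs n)) - (INF t\<in>F2 n. loss n (zs n) t) \<ge> c / real n ^ k"
  proof -
    have "\<forall>n\<ge>1. expect_unif (F2 n) (loss n (zs n)) - (INF t\<in>F2 n. loss n (zs n) t) \<ge> (1/2::real) / real n ^ 0"
    proof (intro allI impI)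
      fix n :: nat assume "1 \<le> n"
      then have "(2::real) ^ 1 \<le> 2 ^ n" by (intro power_increasing) auto
      then show "expect_unif (F2 n) (loss n (zs n)) - (INF t\<in>F2 n. loss n (zs n) t) \<ge> (1/2::real) / real n ^ 0"
        by (simp add: E I field_simps)
    qed
    then show ?thesis by (intro exI[of _ "1/2::real"] conjI exI[of _ "0::nat"] exI[of _ "1::nat"]) auto
  qed
  have B: "\<exists>c>0. \<exists>C. \<exists>N. \<forall>n\<ge>N. \<forall>\<delta>>0.
        prob_unif (F2 n) (\<lambda>t. \<bar>loss n (zs n) t - expect_unif (F2 n) (loss n (zs n))\<bar> > \<delta>)
          \<le> C * 2 powr (- c * real n) / \<delta>\<^sup>2"
  proof (intro exI[of _ "1::real"] conjI exI[of _ "1::real"] exI[of _ "0::nat"] allI impI)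
    fix n :: nat and \<delta> :: real assume "0 \<le> n" and dp: "0 < \<delta>"
    define P where "P = {t\<in>F2 n. \<bar>loss n (zs n) t - expect_unif (F2 n) (loss n (zs n))\<bar> > \<delta>}"
    have pw: "1 * 2 powr (- 1 * real n) / \<delta>\<^sup>2 = 1 / (2 ^ n * \<delta>\<^sup>2)"
      by (simp add: powr_minus powr_realpow divide_inverse)
    have pos: "(0::real) < 2 ^ n" by simp
    have "real (card P) / 2 ^ n \<le> 1 / (2 ^ n * \<delta>\<^sup>2)"
    proof (cases "\<delta> < 1 / 2 ^ n")
      case True
      have "card P \<le> card (F2 n)" unfolding P_def by (rule card_mono[OF F2_finite]) auto
      then have c1: "real (card P) / 2 ^ n \<le> 1" by (simp add: F2_card)
      have "\<delta> * 2 ^ n < 1" using True pos by (simp add: field_simps)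
      then have "\<delta> * 2 ^ n * (\<delta> * 2 ^ n) \<le> 1 * 1" using dp pos
        by (intro mult_mono) auto
      moreover have "(1::real) \<le> 2 ^ n" by simp
      ultimately have "\<delta>\<^sup>2 * 2 ^ n \<le> 1"
        by (smt (verit) dp mult_le_cancel_left2 mult_pos_pos pos power2_eq_square mult.assoc mult.commute)
      then have "1 \<le> 1 / (2 ^ n * \<delta>\<^sup>2)" using dp pos by (simp add: field_simps)
      then show ?thesis using c1 by linarith
    next
      case False
      have sub: "P \<subseteq> {zs n}"
      proof
        fix t assume t: "t \<in> P"
        show "t \<in> {zs n}"
        proof (rule ccontr)
          assume "t \<notin> {zs n}"
          then have "loss n (zs n) t = 1" by (simp add: loss_eq)
          then show False using t False by (simp add: P_def E)
        qed
      qed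
      show ?thesis
      proof (cases "P = {}")
        case True then show ?thesis using dp by simp
      next
        case ne: False
        then have "P = {zs n}" using sub by auto
        then have "\<bar>loss n (zs n) (zs n) - (1 - 1 / 2 ^ n)\<bar> > \<delta>" by (auto simp: P_def E)
        then have "\<delta> < 1 - 1 / 2 ^ n" using zm[of n] by (simp add: loss_eq)
        moreover have "(0::real) < 1 / 2 ^ n" by simp
        ultimately have "\<delta> < 1" by linarith
        then have "\<delta>\<^sup>2 \<le> 1" using dp by (simp add: power_le_one)
        then have "1 / 2 ^ n \<le> 1 / (2 ^ n * \<delta>\<^sup>2)" using dp pos
          by (intro divide_left_mono) auto
        then show ?thesis using \<open>P = {zs n}\<close> by simp
      qed
    qed
    then show "prob_unif (F2 n) (\<lambda>t. \<bar>loss n (zs n) t - expect_unif (F2 n) (loss n (zs n))\<bar> > \<delta>)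
          \<le> 1 * 2 powr (- 1 * real n) / \<delta>\<^sup>2"
      unfolding pw by (simp add: prob_unif_def P_def[symmetric] F2_card)
  qed simp
  show ?thesis unfolding narrow_gorge_unif_def using A B by blast
qed

theorem mainTheorem13:
  fixes n q :: nat and \<epsilon> \<beta> \<tau> :: real
    and Q out :: "real list \<Rightarrow> bool list"
  assumes "0 \<le> \<epsilon>" "\<epsilon> < 1" "\<beta> > 0" "0 \<le> \<tau>" "\<tau> \<le> 1"
    and "mu n (success_set n \<epsilon> \<tau> Q out q) \<ge> \<beta>"
  shows "real q \<ge> (\<beta> - 2 powr (- real n)) * 2 ^ n
    \<and> (\<forall>zs. (\<forall>m. zs m \<in> F2 m) \<longrightarrow> narrow_gorge_unif (\<lambda>m. loss m (zs m)) F2)"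
  using part1[OF assms] part2 by blast

end
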